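(* In the conditional setting described in the context, fix $\mathbf x\in\mathcal X$ and assume A1$''$, A2 and A3. Suppose there exist a fixed subset $\mathcal K^*\subseteq\{1,\dots,K\}$ and a constant $\delta>0$ such that $\inf_{\mathbf w\in\mathcal W^*}\sum_{k\in\mathcal K^*}w_k\ge\frac12+\delta$ and $$\limsup_{n\to\infty}\Pr\Big(\bigcup_{k\in\mathcal K^*}\{Y_{\mathbf x}\notin\mathcal C_k(\mathbf x;\mathcal D_n)\}\Big)\le\alpha.$$ Then $\liminf_{n\to\infty}\Pr\big(Y_{\mathbf x}\in\mathcal C_{\mathrm{comb}}(\mathbf x;\mathcal D_n)\big)\ge1-\alpha$.
   Context: Conditional setting: fix $K\ge2$ and $\alpha\in(0,1)$. For each $n$, on a common probability space there is a random data set $\mathcal D_n$. For each $k\in\{1,\dots,K\}$ and each $\mathbf x\in\mathcal X\subseteq\mathbb R^p$, $\mathcal C_k(\mathbf x;\mathcal D_n)\subseteq\mathbb R$ is a prediction set determined by $\mathcal D_n$ and $\mathbf x$. For a fixed test covariate value $\mathbf x$, $Y_{\mathbf x}$ denotes a real random variable distributed as the conditional law of the response given covariate $\mathbf x$, independent of $\mathcal D_n$; conditioning on $\{\mathbf X=\mathbf x\}$ means evaluating at $\mathbf x$ with response $Y_{\mathbf x}$. The events $\{Y_{\mathbf x}\in\mathcal C_k(\mathbf x;\mathcal D_n)\}$ are assumed measurable. Let $\Delta^{K-1}=\{\mathbf w\in[0,1]^K:w_k\ge0,\sum_k w_k=1\}$, let $\widehat{\mathbf w}_n=(\widehat w_{n,1},\dots,\widehat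 w_{n,K})$ be a $\sigma(\mathcal D_n)$-measurable random vector in $\Delta^{K-1}$, and let $\mathcal W^*\subseteq\Delta^{K-1}$ be a nonempty closed convex set; $\|\cdot\|$ is the Euclidean norm. A1$''$: $\sup_{k\in\{1,\dots,K\}}\big|\Pr(Y_{\mathbf x}\notin\mathcal C_k(\mathbf x;\mathcal D_n)\mid\mathcal D_n)-\alpha\big|\to0$ in probability as $n\to\infty$. A2: $\inf_{\mathbf w\in\mathcal W^*}\|\widehat{\mathbf w}_n-\mathbf w\|\to0$ in probability as $n\to\infty$. A3: $\mathcal C_{\mathrm{comb}}(\mathbf x;\mathcal D_n):=\{y\in\mathbb R:\sum_{k=1}^K\widehat w_{n,k}\mathbf 1\{y\in\mathcal C_k(\mathbf x;\mathcal D_n)\}>1/2\}$. *)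

theory Defs
  imports "HOL-Probability.Probability"
begin

definition prob_simplex :: "(real ^ 'k::finite) set" where
  "prob_simplex = {w. (\<forall>k. w $ k \<ge> 0) \<and> (\<Sum>k\<in>UNIV. w $ k) = 1}"

definition conv_in_prob :: "'a measure \<Rightarrow> (nat \<Rightarrow> 'a \<Rightarrow> real) \<Rightarrow> real \<Rightarrow> bool" where
  "conv_in_prob M X c \<longleftrightarrow>
     (\<forall>e>0. (\<lambda>n. measure M {\<omega>\<in>space M. \<bar>X n \<omega> - c\<bar> > e}) \<longlonglongrightarrow> 0)"

definition C_comb :: "(real ^ 'k::finite) \<Rightarrow> ('k \<Rightarrow> real set) \<Rightarrow> real set" where
  "C_comb w C = {y. (\<Sum>k\<in>UNIV. w $ k * indicator (C k) y) > 1/2}"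

end

theory Submission
  imports Defs
begin

lemma key:
  fixes w :: "real ^ 'k::finite" and Wstar :: "(real ^ 'k) set"
  assumes w: "w \<in> prob_simplex" and ne: "Wstar \<noteq> {}" and sub: "Wstar \<subseteq> prob_simplex"
    and K: "(INF v\<in>Wstar. (\<Sum>k\<in>Ks. v $ k)) \<ge> 1/2 + \<delta>" and d: "\<delta> > 0"
    and id: "infdist w Wstar < \<delta> / (2 * (real (card Ks) + 1))"
    and cov: "\<forall>k\<in>Ks. y \<in> Cs k"
  shows "y \<in> C_comb w Cs"
proof -
  let ?\<eta> = "\<delta> / (2 * (real (card Ks) + 1))"
  have bddd: "bdd_below ((\<lambda>a. dist w a) ` Wstar)" by (rule bdd_belowI2[where m=0]) simp
  have "\<exists>a\<in>Wstar. dist w a < ?\<eta>"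
    using id infdist_notempty[OF ne, of w] cINF_less_iff[OF ne bddd, of ?\<eta>] by simp
  then obtain v where v: "v \<in> Wstar" "dist w v < ?\<eta>" by blast
  have bdd: "bdd_below ((\<lambda>v. \<Sum>k\<in>Ks. v $ k) ` Wstar)"
    by (rule bdd_belowI2[where m=0]) (use sub in \<open>auto simp: prob_simplex_def intro: sum_nonneg\<close>)
  have "(INF v\<in>Wstar. (\<Sum>k\<in>Ks. v $ k)) \<le> (\<Sum>k\<in>Ks. v $ k)"
    by (rule cINF_lower[OF bdd v(1)])
  with K have sv: "(\<Sum>k\<in>Ks. v $ k) \<ge> 1/2 + \<delta>" by simp
  have "\<bar>(\<Sum>k\<in>Ks. v $ k) - (\<Sum>k\<in>Ks. w $ k)\<bar> \<le> (\<Sum>k\<in>Ks. \<bar>v $ k - w $ k\<bar>)"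
    by (metis sum_subtractf sum_abs)
  also have "\<dots> \<le> (\<Sum>k\<in>Ks. dist w v)"
  proof (rule sum_mono)
    fix k show "\<bar>v $ k - w $ k\<bar> \<le> dist w v"
      using component_le_norm_cart[of "w - v" k] by (simp add: dist_norm abs_minus_commute)
  qed
  also have "\<dots> = real (card Ks) * dist w v" by simp
  also have "\<dots> \<le> real (card Ks) * ?\<eta>" using v(2) by (intro mult_left_mono) auto
  also have "\<dots> < \<delta> / 2"
  proof -
    have h: "real (card Ks) * \<delta> < (real (card Ks) + 1) * \<delta>" using d by (simp add: algebra_simps)
    show ?thesis using h by (simp add: field_simps)
  qed
  finally have sw: "(\<Sum>k\<in>Ks. w $ k) > 1/2" using sv by linarith
  have wnn: "\<And>k. w $ k \<ge> 0" using w by (simp add: prob_simplex_def)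
  have "(\<Sum>k\<in>Ks. w $ k) = (\<Sum>k\<in>Ks. w $ k * indicator (Cs k) y)"
    using cov by (intro sum.cong) auto
  also have "\<dots> \<le> (\<Sum>k\<in>UNIV. w $ k * indicator (Cs k) y)"
    by (rule sum_mono2) (auto simp: wnn)
  finally show ?thesis using sw by (simp add: C_comb_def)
qed

theorem theorem4:
  fixes M :: "'a measure" and DS :: "'d measure"
    and D :: "nat \<Rightarrow> 'a \<Rightarrow> 'd" and Y :: "'a \<Rightarrow> real"
    and C :: "'k::finite \<Rightarrow> 'x \<Rightarrow> 'd \<Rightarrow> real set"
    and W :: "nat \<Rightarrow> 'd \<Rightarrow> real ^ 'k"
    and Wstar :: "(real ^ 'k) set" and Ks :: "'k set"
    and X :: "'x set" and x :: 'x and \<alpha> \<delta> :: real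
  assumes M: "prob_space M"
    and K2: "CARD('k) \<ge> 2"
    and alpha: "0 < \<alpha>" "\<alpha> < 1"
    and x: "x \<in> X"
    and D_meas: "\<And>n. D n \<in> M \<rightarrow>\<^sub>M DS"
    and Y_meas: "Y \<in> borel_measurable M"
    and indep: "\<And>n. prob_space.indep_set M (sets (vimage_algebra (space M) (D n) DS)) (sets (vimage_algebra (space M) Y borel))"
    and C_meas: "\<And>k. {(d, y). y \<in> C k x d} \<in> sets (DS \<Otimes>\<^sub>M borel)"
    and W_meas: "\<And>n. W n \<in> borel_measurable DS"
    and W_simplex: "\<And>n \<omega>. \<omega> \<in> space M \<Longrightarrow> W n (D n \<omega>) \<in> prob_simplex"
    and Wstar: "Wstar \<noteq> {}" "closed Wstar" "convex Wstar" "Wstar \<subseteq> prob_simplex"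
    and A1: "conv_in_prob M
               (\<lambda>n \<omega>. Max (range (\<lambda>k. \<bar>measure M {\<omega>'\<in>space M. Y \<omega>' \<notin> C k x (D n \<omega>)} - \<alpha>\<bar>))) 0"
    and A2: "conv_in_prob M (\<lambda>n \<omega>. infdist (W n (D n \<omega>)) Wstar) 0"
    and delta: "\<delta> > 0"
    and Kstar: "(INF w\<in>Wstar. (\<Sum>k\<in>Ks. w $ k)) \<ge> 1/2 + \<delta>"
    and union_cov: "limsup (\<lambda>n. ereal (measure M
               {\<omega>\<in>space M. \<exists>k\<in>Ks. Y \<omega> \<notin> C k x (D n \<omega>)})) \<le> ereal \<alpha>"
  shows "liminf (\<lambda>n. ereal (measure M
               {\<omega>\<in>space M. Y \<omega> \<in> C_comb (W n (D n \<omega>)) (\<lambda>k. C k x (D n \<omega>))}))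
           \<ge> ereal (1 - \<alpha>)"
proof -
  interpret prob_space M by (rule M)
  define \<eta> where "\<eta> = \<delta> / (2 * (real (card Ks) + 1))"
  have eta: "\<eta> > 0" using delta by (simp add: \<eta>_def add_pos_nonneg)
  define S where "S k = {(d, y). y \<in> C k x d}" for k
  define U where "U n = {\<omega>\<in>space M. \<exists>k\<in>Ks. Y \<omega> \<notin> C k x (D n \<omega>)}" for n
  define B where "B n = {\<omega>\<in>space M. \<bar>infdist (W n (D n \<omega>)) Wstar - 0\<bar> > \<eta>/2}" for n
  define G where "G n = {\<omega>\<in>space M. Y \<omega> \<in> C_comb (W n (D n \<omega>)) (\<lambda>k. C k x (D n \<omega>))}" for n
  have pair: "(\<lambda>\<omega>. (D n \<omega>, Y \<omega>)) \<in> M \<rightarrow>\<^sub>M DS \<Otimes>\<^sub>M borel" for n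
    by (intro measurable_Pair D_meas Y_meas)
  have Sm: "{\<omega>\<in>space M. Y \<omega> \<in> C k x (D n \<omega>)} \<in> sets M" for k n
  proof -
    have "{\<omega>\<in>space M. Y \<omega> \<in> C k x (D n \<omega>)} = (\<lambda>\<omega>. (D n \<omega>, Y \<omega>)) -` S k \<inter> space M"
      by (auto simp: S_def)
    also have "\<dots> \<in> sets M" using measurable_sets[OF pair C_meas[of k, folded S_def]] .
    finally show ?thesis .
  qed
  have Um: "U n \<in> sets M" for n
  proof -
    have "U n = (\<Union>k\<in>Ks. space M - {\<omega>\<in>space M. Y \<omega> \<in> C k x (D n \<omega>)})"
      by (auto simp: U_def)
    also have "\<dots> \<in> sets M" using Sm by (intro sets.finite_UN) auto
    finally show ?thesis .
  qed
  have WD: "(\<lambda>\<omega>. W n (D n \<omega>)) \<in> borel_measurable M" for n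
    using measurable_comp[OF D_meas W_meas] by (simp add: comp_def)
  have inf_m: "(\<lambda>w. infdist w Wstar) \<in> borel_measurable borel"
    by (intro borel_measurable_continuous_onI continuous_intros)
  have fm: "(\<lambda>\<omega>. infdist (W n (D n \<omega>)) Wstar) \<in> borel_measurable M" for n
    using measurable_comp[OF WD inf_m] by (simp add: comp_def)
  have Bm: "B n \<in> sets M" for n
    unfolding B_def using fm[of n] by measurable
  have ind_m: "(\<lambda>\<omega>. indicator (C k x (D n \<omega>)) (Y \<omega>) :: real) \<in> borel_measurable M" for k n
  proof -
    have "(\<lambda>\<omega>. indicator (S k) (D n \<omega>, Y \<omega>) :: real) \<in> borel_measurable M"
      using measurable_comp[OF pair borel_measurable_indicator[OF C_meas[of k, folded S_def]]]
      by (simp add: comp_def)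
    moreover have "(\<lambda>\<omega>. indicator (S k) (D n \<omega>, Y \<omega>) :: real) = (\<lambda>\<omega>. indicator (C k x (D n \<omega>)) (Y \<omega>))"
      by (auto simp: S_def indicator_def)
    ultimately show ?thesis by simp
  qed
  have comp_m: "(\<lambda>\<omega>. W n (D n \<omega>) $ k) \<in> borel_measurable M" for n k
    using measurable_comp[OF WD borel_measurable_nth[of k]] by (simp add: comp_def)
  have gm: "(\<lambda>\<omega>. \<Sum>k\<in>UNIV. W n (D n \<omega>) $ k * indicator (C k x (D n \<omega>)) (Y \<omega>)) \<in> borel_measurable M" for n
    using comp_m ind_m by (intro borel_measurable_sum borel_measurable_times) auto
  have Gm: "G n \<in> sets M" for n
    unfolding G_def C_comb_def mem_Collect_eq using gm[of n] by measurable
  have lower: "1 - measure M (U n) - measure M (B n) \<le> measure M (G n)" for n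
  proof -
    have sub: "space M - (U n \<union> B n) \<subseteq> G n"
    proof
      fix \<omega> assume w: "\<omega> \<in> space M - (U n \<union> B n)"
      have "infdist (W n (D n \<omega>)) Wstar \<le> \<eta>/2" using w by (auto simp: B_def)
      hence "infdist (W n (D n \<omega>)) Wstar < \<eta>" using eta by linarith
      moreover have "\<forall>k\<in>Ks. Y \<omega> \<in> C k x (D n \<omega>)" using w by (auto simp: U_def)
      ultimately have "Y \<omega> \<in> C_comb (W n (D n \<omega>)) (\<lambda>k. C k x (D n \<omega>))"
        using key[OF W_simplex Wstar(1) Wstar(4) Kstar delta] w unfolding \<eta>_def by auto
      thus "\<omega> \<in> G n" using w by (simp add: G_def)
    qed
    have "1 - measure M (U n) - measure M (B n) \<le> 1 - measure M (U n \<union> B n)"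
      using measure_Un_le[OF Um[of n] Bm[of n]] by linarith
    also have "\<dots> = measure M (space M - (U n \<union> B n))"
      using prob_compl[OF sets.Un[OF Um[of n] Bm[of n]]] by simp
    also have "\<dots> \<le> measure M (G n)" using finite_measure_mono[OF sub Gm[of n]] .
    finally show ?thesis .
  qed
  have Blim: "(\<lambda>n. measure M (B n)) \<longlonglongrightarrow> 0"
    unfolding B_def by (rule A2[unfolded conv_in_prob_def, rule_format]) (use eta in simp)
  show ?thesis
    unfolding le_Liminf_iff
  proof (intro allI impI)
    fix y assume "y < ereal (1 - \<alpha>)"
    then obtain r where r: "y < ereal r" "r < 1 - \<alpha>" using ereal_dense2 by fastforce
    define \<epsilon> where "\<epsilon> = 1 - \<alpha> - r"
    have e: "\<epsilon> > 0" using r by (simp add: \<epsilon>_def)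
    have "Limsup sequentially (\<lambda>n. ereal (measure M (U n))) < ereal (\<alpha> + \<epsilon>/2)"
      proof -
      have "ereal \<alpha> < ereal (\<alpha> + \<epsilon>/2)" using e by simp
      thus ?thesis using union_cov unfolding U_def by (rule le_less_trans[rotated])
    qed
    hence ev1: "eventually (\<lambda>n. measure M (U n) < \<alpha> + \<epsilon>/2) sequentially"
      by (auto dest: Limsup_lessD)
    have ev2: "eventually (\<lambda>n. measure M (B n) < \<epsilon>/2) sequentially"
      using order_tendstoD(2)[OF Blim, of "\<epsilon>/2"] e by simp
    show "eventually (\<lambda>n. y < ereal (measure M {\<omega>\<in>space M. Y \<omega> \<in> C_comb (W n (D n \<omega>)) (\<lambda>k. C k x (D n \<omega>))})) sequentially"
      using ev1 ev2
    proof eventually_elim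
      case (elim n)
      have "r < measure M (G n)" using lower[of n] elim by (simp add: \<epsilon>_def field_simps)
      hence "ereal r < ereal (measure M (G n))" by simp
      thus ?case unfolding G_def by (rule less_trans[OF r(1)])
    qed
  qed
qed

end
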